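(* Let $X$ be a Banach space, let $A$ generate a $C_0$-semigroup on $X$, let $U$ be a finite-dimensional Banach space and let $Z$ be one of $E_\Phi$ (for a Young function $\Phi$), $L^1$, $L^\infty$ or ${\rm C}$. Let $B\in\mathcal{L}(U,X_{-1})$. Then $B$ is $Z$-admissible if and only if for every $f\in U$ the operator $Bf\in\mathcal{L}(\mathbb{C},X_{-1})$, $z\mapsto zBf$, is $Z$-admissible. The same equivalence holds with "$Z$-admissible" replaced by "infinite-time $Z$-admissible" on both sides.
   Context: $X_{-1}$ is the completion of $X$ w.r.t. $\|(\beta-A)^{-1}\cdot\|$ for some $\beta\in\rho(A)$, and $T_{-1}$ is the extension of the semigroup $T$ generated by $A$ to $X_{-1}$. A Young function is a continuous, convex, increasing $\Phi:[0,\infty)\to[0,\infty)$ with $\Phi(x)/x\to0$ as $x\to0$ and $\Phi(x)/x\to\infty$ as $x\to\infty$. For an interval $I$, $L_\Phi(I;U)$ is the space of Bochner measurable $u:I\to U$ with $\Phi(\|ku(\cdot)\|)$ integrable for some $k>0$, normed by $\|u\|=\inf\{k>0:\int_I\Phi(\|u(s)\|/k)\,ds\le1\}$, and $E_\Phi(I;U)$ is the closure in $L_\Phi(I;U)$ of the $L^\infty(I;U)$-functions with bounded essential support. ${\rm C}(I;U)$ denotes continuous functions with the sup norm. For $Z$ one of these spaces, $B\in\mathcal{L}(U,X_{-1})$ is $Z$-admissible if for all $t>0$ the operator $\Phi_t:Z(0,t;U)\to X_{-1}$, $u\mapsto\int_0^tT_{-1}(s)Bu(s)\,ds$, has range in $X$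 (it is then bounded into $X$); it is infinite-time $Z$-admissible if moreover $\sup_{t>0}\|\Phi_t\|_{\mathcal{L}(Z(0,t;U),X)}<\infty$. *)

theory Defs
  imports "HOL-Analysis.Analysis"
begin

text \<open>HOL-Analysis only provides real normed vector spaces.\<close>

class complex_normed_space = real_normed_vector +
  fixes cscale :: "complex \<Rightarrow> 'a \<Rightarrow> 'a"
  assumes cscale_of_real: "cscale (complex_of_real r) x = scaleR r x"
    and cscale_add_right: "cscale a (x + y) = cscale a x + cscale a y"
    and cscale_add_left: "cscale (a + b) x = cscale a x + cscale b x"
    and cscale_cscale: "cscale a (cscale b x) = cscale (a * b) x"
    and cscale_one: "cscale 1 x = x"
    and norm_cscale: "norm (cscale a x) = cmod a * norm x"

instantiation complex :: complex_normed_space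
begin
definition cscale_complex :: "complex \<Rightarrow> complex \<Rightarrow> complex" where
  "cscale_complex a x = a * x"
instance
  by standard (auto simp: cscale_complex_def scaleR_conv_of_real algebra_simps norm_mult)
end

definition cbounded_linear :: "('a::complex_normed_space \<Rightarrow> 'b::complex_normed_space) \<Rightarrow> bool" where
  "cbounded_linear f \<longleftrightarrow> bounded_linear f \<and> (\<forall>c x. f (cscale c x) = cscale c (f x))"

definition complex_finite_dim :: "'a::complex_normed_space set \<Rightarrow> bool" where
  "complex_finite_dim V \<longleftrightarrow>
     (\<exists>S. S \<subseteq> V \<and> finite S \<and> (\<forall>x\<in>V. \<exists>c. x = (\<Sum>s\<in>S. cscale (c s) s)))"

definition c0_semigroup :: "(real \<Rightarrow> 'x::complex_normed_space \<Rightarrow> 'x) \<Rightarrow> bool" where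
  "c0_semigroup T \<longleftrightarrow>
     (\<forall>t\<ge>0. cbounded_linear (T t)) \<and> T 0 = id \<and>
     (\<forall>s\<ge>0. \<forall>t\<ge>0. T (s + t) = T s \<circ> T t) \<and>
     (\<forall>x. ((\<lambda>t. T t x) \<longlongrightarrow> x) (at_right 0))"

definition gen_domain :: "(real \<Rightarrow> 'x::complex_normed_space \<Rightarrow> 'x) \<Rightarrow> 'x set" where
  "gen_domain T = {x. \<exists>y. ((\<lambda>h. (T h x - x) /\<^sub>R h) \<longlongrightarrow> y) (at_right 0)}"

definition generator :: "(real \<Rightarrow> 'x::complex_normed_space \<Rightarrow> 'x) \<Rightarrow> 'x \<Rightarrow> 'x" where
  "generator T x = Lim (at_right 0) (\<lambda>h. (T h x - x) /\<^sub>R h)"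

definition resolvent :: "(real \<Rightarrow> 'x::complex_normed_space \<Rightarrow> 'x) \<Rightarrow> complex \<Rightarrow> 'x \<Rightarrow> 'x" where
  "resolvent T \<beta> = the_inv_into (gen_domain T) (\<lambda>x. cscale \<beta> x - generator T x)"

definition in_resolvent_set :: "(real \<Rightarrow> 'x::complex_normed_space \<Rightarrow> 'x) \<Rightarrow> complex \<Rightarrow> bool" where
  "in_resolvent_set T \<beta> \<longleftrightarrow>
     bij_betw (\<lambda>x. cscale \<beta> x - generator T x) (gen_domain T) UNIV \<and>
     cbounded_linear (resolvent T \<beta>)"

text \<open>\<open>(Xm, j, Tm)\<close> is (a realisation of) the extrapolation space \<open>X\<^sub>-\<^sub>1\<close> with the
  extended semigroup \<open>T\<^sub>-\<^sub>1\<close>: \<open>Xm\<close> is a Banach space (by its sort) into which \<open>X\<close>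
  embeds via the complex-linear map \<open>j\<close>, isometrically for the norm
  \<open>\<parallel>(\<beta>-A)\<^sup>-\<^sup>1 \<cdot>\<parallel>\<close> on \<open>X\<close>, with dense range (i.e. \<open>Xm\<close> is the completion of \<open>X\<close>
  for that norm), and \<open>Tm t\<close> is the bounded operator on \<open>Xm\<close> extending \<open>T t\<close>.\<close>
definition extrapolation_space ::
  "(real \<Rightarrow> 'x::complex_normed_space \<Rightarrow> 'x) \<Rightarrow> complex \<Rightarrow> ('x \<Rightarrow> 'm::complex_normed_space)
     \<Rightarrow> (real \<Rightarrow> 'm \<Rightarrow> 'm) \<Rightarrow> bool" where
  "extrapolation_space T \<beta> j Tm \<longleftrightarrow>
     in_resolvent_set T \<beta> \<and>
     (\<forall>x y. j (x + y) = j x + j y) \<and> (\<forall>c x. j (cscale c x) = cscale c (j x)) \<and>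
     (\<forall>x. norm (j x) = norm (resolvent T \<beta> x)) \<and>
     closure (range j) = UNIV \<and>
     (\<forall>t\<ge>0. cbounded_linear (Tm t) \<and> (\<forall>x. Tm t (j x) = j (T t x)))"

definition bochner_measurable_on :: "real set \<Rightarrow> (real \<Rightarrow> 'a::real_normed_vector) \<Rightarrow> bool" where
  "bochner_measurable_on I u \<longleftrightarrow>
     (\<exists>s :: nat \<Rightarrow> real \<Rightarrow> 'a.
        (\<forall>n. finite (s n ` I) \<and> (\<forall>v. {x\<in>I. s n x = v} \<in> sets (lebesgue_on I))) \<and>
        (AE x in lebesgue_on I. (\<lambda>n. s n x) \<longlonglongrightarrow> u x))"

definition young_function :: "(real \<Rightarrow> real) \<Rightarrow> bool" where
  "young_function \<Phi> \<longleftrightarrow>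
     continuous_on {0..} \<Phi> \<and> convex_on {0..} \<Phi> \<and> strict_mono_on {0..} \<Phi> \<and>
     (\<forall>x\<ge>0. \<Phi> x \<ge> 0) \<and>
     ((\<lambda>x. \<Phi> x / x) \<longlongrightarrow> 0) (at_right 0) \<and>
     filterlim (\<lambda>x. \<Phi> x / x) at_top at_top"

definition orlicz_L :: "(real \<Rightarrow> real) \<Rightarrow> real set \<Rightarrow> (real \<Rightarrow> 'a::real_normed_vector) \<Rightarrow> bool" where
  "orlicz_L \<Phi> I u \<longleftrightarrow> bochner_measurable_on I u \<and>
     (\<exists>k>0. integrable (lebesgue_on I) (\<lambda>s. \<Phi> (norm (k *\<^sub>R u s))))"

definition orlicz_norm :: "(real \<Rightarrow> real) \<Rightarrow> real set \<Rightarrow> (real \<Rightarrow> 'a::real_normed_vector) \<Rightarrow> real" where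
  "orlicz_norm \<Phi> I u =
     Inf {k. k > 0 \<and> (\<integral>\<^sup>+ s. ennreal (\<Phi> (norm (u s) / k)) \<partial>lebesgue_on I) \<le> 1}"

definition Linf_on :: "real set \<Rightarrow> (real \<Rightarrow> 'a::real_normed_vector) \<Rightarrow> bool" where
  "Linf_on I u \<longleftrightarrow> bochner_measurable_on I u \<and> (\<exists>C. AE s in lebesgue_on I. norm (u s) \<le> C)"

definition bounded_ess_support :: "real set \<Rightarrow> (real \<Rightarrow> 'a::real_normed_vector) \<Rightarrow> bool" where
  "bounded_ess_support I u \<longleftrightarrow> (\<exists>R. AE s in lebesgue_on I. \<bar>s\<bar> > R \<longrightarrow> u s = 0)"

definition orlicz_E :: "(real \<Rightarrow> real) \<Rightarrow> real set \<Rightarrow> (real \<Rightarrow> 'a::real_normed_vector) \<Rightarrow> bool" where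
  "orlicz_E \<Phi> I u \<longleftrightarrow> orlicz_L \<Phi> I u \<and>
     (\<forall>\<epsilon>>0. \<exists>v. Linf_on I v \<and> bounded_ess_support I v \<and>
                orlicz_norm \<Phi> I (\<lambda>s. u s - v s) < \<epsilon>)"

datatype zspace = ZE "real \<Rightarrow> real" | ZL1 | ZLinf | ZC

definition valid_zspace :: "zspace \<Rightarrow> bool" where
  "valid_zspace Z = (case Z of ZE \<Phi> \<Rightarrow> young_function \<Phi> | _ \<Rightarrow> True)"

definition zmem :: "zspace \<Rightarrow> real set \<Rightarrow> (real \<Rightarrow> 'a::real_normed_vector) \<Rightarrow> bool" where
  "zmem Z I u = (case Z of
      ZE \<Phi> \<Rightarrow> orlicz_E \<Phi> I u
    | ZL1 \<Rightarrow> bochner_measurable_on I u \<and> integrable (lebesgue_on I) (\<lambda>s. norm (u s))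
    | ZLinf \<Rightarrow> Linf_on I u
    | ZC \<Rightarrow> continuous_on I u)"

definition znorm :: "zspace \<Rightarrow> real set \<Rightarrow> (real \<Rightarrow> 'a::real_normed_vector) \<Rightarrow> real" where
  "znorm Z I u = (case Z of
      ZE \<Phi> \<Rightarrow> orlicz_norm \<Phi> I u
    | ZL1 \<Rightarrow> (\<integral> s. norm (u s) \<partial>lebesgue_on I)
    | ZLinf \<Rightarrow> Inf {C. C \<ge> 0 \<and> (AE s in lebesgue_on I. norm (u s) \<le> C)}
    | ZC \<Rightarrow> Sup ((\<lambda>s. norm (u s)) ` I))"

text \<open>\<open>B \<in> \<L>(V,X\<^sub>-\<^sub>1)\<close> is \<open>Z\<close>-admissible: for every \<open>t > 0\<close> and every \<open>u \<in> Z(0,t;V)\<close>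
  the integral \<open>\<integral>\<^sub>0\<^sup>t T\<^sub>-\<^sub>1(s) B u(s) ds\<close> lies in \<open>X\<close> (i.e. equals \<open>j x\<close> for some \<open>x\<close>).\<close>
definition z_admissible ::
  "zspace \<Rightarrow> (real \<Rightarrow> 'm::complex_normed_space \<Rightarrow> 'm) \<Rightarrow> ('x::complex_normed_space \<Rightarrow> 'm)
     \<Rightarrow> ('v::complex_normed_space \<Rightarrow> 'm) \<Rightarrow> bool" where
  "z_admissible Z Tm j B \<longleftrightarrow>
     (\<forall>t>0. \<forall>u::real \<Rightarrow> 'v. zmem Z {0..t} u \<longrightarrow>
        (\<exists>x. ((\<lambda>s. Tm s (B (u s))) has_integral j x) {0..t}))"

text \<open>Infinite-time \<open>Z\<close>-admissibility: additionally \<open>sup\<^sub>t\<^sub>>\<^sub>0 \<parallel>\<Phi>\<^sub>t\<parallel> < \<infinity>\<close>.\<close>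
definition inf_z_admissible ::
  "zspace \<Rightarrow> (real \<Rightarrow> 'm::complex_normed_space \<Rightarrow> 'm) \<Rightarrow> ('x::complex_normed_space \<Rightarrow> 'm)
     \<Rightarrow> ('v::complex_normed_space \<Rightarrow> 'm) \<Rightarrow> bool" where
  "inf_z_admissible Z Tm j B \<longleftrightarrow>
     (\<exists>M. \<forall>t>0. \<forall>u::real \<Rightarrow> 'v. zmem Z {0..t} u \<longrightarrow>
        (\<exists>x. ((\<lambda>s. Tm s (B (u s))) has_integral j x) {0..t} \<and> norm x \<le> M * znorm Z {0..t} u))"

end

theory Submission
  imports Defs
begin

lemma complete_lebesgue_on:
  assumes "I \<in> sets lebesgue"
  shows "complete_measure (lebesgue_on I)"
proof
  fix A B assume BA: "B \<subseteq> A" and A: "A \<in> null_sets (lebesgue_on I)"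
  then have AI: "A \<subseteq> I" and A': "A \<in> null_sets lebesgue"
    using null_sets_restrict_space[OF assms] by auto
  have "B \<in> null_sets lebesgue"
    using completion.complete2[OF BA A'] .
  then show "B \<in> sets (lebesgue_on I)"
    using BA AI assms by (simp add: sets_restrict_space_iff null_setsD2)
qed

lemma measurable_AE_complete:
  fixes f g :: "'a \<Rightarrow> 'b::topological_space"
  assumes "complete_measure M" and f: "f \<in> borel_measurable M" and ae: "AE x in M. f x = g x"
  shows "g \<in> borel_measurable M"
proof (rule borel_measurableI)
  fix S :: "'b set" assume "open S"
  have A: "f -` S \<inter> space M \<in> sets M" using f \<open>open S\<close> by (simp add: measurable_sets borel_open)
  have "AE x in M. x \<in> f -` S \<inter> space M \<longleftrightarrow> x \<in> g -` S \<inter> space M"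
    using ae by eventually_elim auto
  then show "g -` S \<inter> space M \<in> sets M"
    using complete_measure.in_sets_AE[OF assms(1) _ A] by blast
qed

lemma space_lebesgue_on [simp]: "space (lebesgue_on I) = (I::real set)"
  by (simp add: space_restrict_space)

lemma bochner_simple:
  assumes "finite (s ` I)" "\<forall>v. {x\<in>I. s x = v} \<in> sets (lebesgue_on I)"
  shows "simple_function (lebesgue_on (I::real set)) s"
  unfolding simple_function_def
proof (intro conjI ballI)
  show "finite (s ` space (lebesgue_on I))" using assms by simp
  fix v assume "v \<in> s ` space (lebesgue_on I)"
  have "s -` {v} \<inter> space (lebesgue_on I) = {x\<in>I. s x = v}" by auto
  then show "s -` {v} \<inter> space (lebesgue_on I) \<in> sets (lebesgue_on I)" using assms(2) by metis
qed

lemma bochner_meas2: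
  fixes u :: "real \<Rightarrow> 'a::real_normed_vector" and v :: "real \<Rightarrow> 'b::real_normed_vector"
    and h :: "'a \<Rightarrow> 'b \<Rightarrow> real"
  assumes I: "I \<in> sets lebesgue" and bu: "bochner_measurable_on I u" and bv: "bochner_measurable_on I v"
    and h: "continuous_on UNIV (\<lambda>p. h (fst p) (snd p))"
  shows "(\<lambda>s. h (u s) (v s)) \<in> borel_measurable (lebesgue_on I)"
proof -
  obtain s where s: "\<And>n. finite (s n ` I) \<and> (\<forall>w. {x\<in>I. s n x = w} \<in> sets (lebesgue_on I))"
    and sl: "AE x in lebesgue_on I. (\<lambda>n. s n x) \<longlonglongrightarrow> u x"
    using bu unfolding bochner_measurable_on_def by blast
  obtain s' where s': "\<And>n. finite (s' n ` I) \<and> (\<forall>w. {x\<in>I. s' n x = w} \<in> sets (lebesgue_on I))"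
    and sl': "AE x in lebesgue_on I. (\<lambda>n. s' n x) \<longlonglongrightarrow> v x"
    using bv unfolding bochner_measurable_on_def by blast
  define g where "g n x = h (s n x) (s' n x)" for n x
  have sfs: "simple_function (lebesgue_on I) (s n)" for n
    using bochner_simple[of "s n" I] s[of n] by blast
  have sfs': "simple_function (lebesgue_on I) (s' n)" for n
    using bochner_simple[of "s' n" I] s'[of n] by blast
  have gm: "g n \<in> borel_measurable (lebesgue_on I)" for n
    unfolding g_def by (rule borel_measurable_simple_function[OF simple_function_compose2[OF sfs sfs']])
  have Gm: "(\<lambda>x. lim (\<lambda>n. g n x)) \<in> borel_measurable (lebesgue_on I)"
    using gm by (rule borel_measurable_lim_metric)
  have ic: "isCont (\<lambda>p. h (fst p) (snd p)) q" for q
    using h by (simp add: continuous_on_eq_continuous_at del: split_paired_All)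
  have ae: "AE x in lebesgue_on I. lim (\<lambda>n. g n x) = h (u x) (v x)"
    using sl sl'
  proof eventually_elim
    case (elim x)
    have "(\<lambda>n. (s n x, s' n x)) \<longlonglongrightarrow> (u x, v x)" using elim by (intro tendsto_Pair)
    from isCont_tendsto_compose[OF ic this]
    have "(\<lambda>n. g n x) \<longlonglongrightarrow> h (u x) (v x)" unfolding g_def by simp
    then show ?case by (rule limI)
  qed
  show ?thesis
    by (rule measurable_AE_complete[OF complete_lebesgue_on[OF I] Gm, where g="\<lambda>s. h (u s) (v s)"]) (rule ae)
qed

lemma bochner_map:
  assumes bu: "bochner_measurable_on I u" and L: "bounded_linear L"
  shows "bochner_measurable_on I (\<lambda>x. L (u x))"
proof -
  obtain s where s: "\<And>n. finite (s n ` I) \<and> (\<forall>w. {x\<in>I. s n x = w} \<in> sets (lebesgue_on I))"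
    and sl: "AE x in lebesgue_on I. (\<lambda>n. s n x) \<longlonglongrightarrow> u x"
    using bu unfolding bochner_measurable_on_def by blast
  have sfs: "simple_function (lebesgue_on I) (s n)" for n
    using bochner_simple[of "s n" I] s[of n] by blast
  have sf: "simple_function (lebesgue_on I) (\<lambda>x. L (s n x))" for n
    by (rule simple_function_compose1[OF sfs])
  show ?thesis unfolding bochner_measurable_on_def
  proof (intro exI conjI allI)
    fix n
    have "(\<lambda>x. L (s n x)) ` I = L ` (s n ` I)" by auto
    then show "finite ((\<lambda>x. L (s n x)) ` I)" using s by simp
    fix w
    have eq: "{x\<in>I. L (s n x) = w} = (\<lambda>x. L (s n x)) -` {w} \<inter> space (lebesgue_on I)" by auto
    have "(\<lambda>x. L (s n x)) \<in> measurable (lebesgue_on I) (count_space UNIV)"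
      using sf[of n] simple_function_eq_measurable by blast
    then have "(\<lambda>x. L (s n x)) -` {w} \<inter> space (lebesgue_on I) \<in> sets (lebesgue_on I)"
      by (rule measurable_sets) (simp add: sets_count_space)
    then show "{x\<in>I. L (s n x) = w} \<in> sets (lebesgue_on I)" using eq by metis
  next
    show "AE x in lebesgue_on I. (\<lambda>n. L (s n x)) \<longlonglongrightarrow> L (u x)"
      using sl by (rule eventually_mono) (rule bounded_linear.tendsto[OF L])
  qed
qed

lemma yf_mono:
  assumes "young_function \<Phi>" "0 \<le> x" "x \<le> y"
  shows "\<Phi> x \<le> \<Phi> y"
proof -
  have "strict_mono_on {0..} \<Phi>" using assms(1) unfolding young_function_def by blast
  then show ?thesis using strict_mono_on_leD[of "{0..}" \<Phi> x y] assms(2,3) by simp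
qed

lemma yf_nonneg:
  assumes "young_function \<Phi>" "0 \<le> x" shows "0 \<le> \<Phi> x"
  using assms unfolding young_function_def by blast

lemma yf_zero:
  assumes Y: "young_function \<Phi>" shows "\<Phi> 0 = 0"
proof -
  have c: "continuous_on {0..} \<Phi>" and q: "((\<lambda>x. \<Phi> x / x) \<longlongrightarrow> 0) (at_right 0)"
    using Y unfolding young_function_def by auto
  have "(\<Phi> \<longlongrightarrow> \<Phi> 0) (at 0 within {0..})"
    using c by (simp add: continuous_on_def)
  then have l1: "(\<Phi> \<longlongrightarrow> \<Phi> 0) (at_right 0)"
    by (rule tendsto_within_subset) auto
  have "((\<lambda>x. x * (\<Phi> x / x)) \<longlongrightarrow> 0 * 0) (at_right (0::real))"
    by (rule tendsto_mult[OF tendsto_ident_at q])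
  then have l0: "((\<lambda>x. x * (\<Phi> x / x)) \<longlongrightarrow> 0) (at_right (0::real))" by simp
  have ev: "\<forall>\<^sub>F x in at_right (0::real). x * (\<Phi> x / x) = \<Phi> x"
    using eventually_at_right_less by (rule eventually_mono) simp
  have l2: "(\<Phi> \<longlongrightarrow> 0) (at_right 0)"
    using Lim_transform_eventually[OF l0 ev] by simp
  show ?thesis using tendsto_unique[OF trivial_limit_at_right_real l1 l2] .
qed

lemma yf_scale:
  assumes Y: "young_function \<Phi>" and "0 \<le> l" "l \<le> 1" "0 \<le> y"
  shows "\<Phi> (l * y) \<le> l * \<Phi> y"
proof -
  have cv: "convex_on {0..} \<Phi>" using Y unfolding young_function_def by auto
  have "\<Phi> ((1 - l) *\<^sub>R 0 + l *\<^sub>R y) \<le> (1 - l) * \<Phi> 0 + l * \<Phi> y"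
    using convex_onD[OF cv, of l 0 y] assms by auto
  then show ?thesis using yf_zero[OF Y] by simp
qed

lemma yf_mid:
  assumes Y: "young_function \<Phi>" and "0 \<le> a" "0 \<le> b"
  shows "\<Phi> ((a + b) / 2) \<le> (\<Phi> a + \<Phi> b) / 2"
proof -
  have cv: "convex_on {0..} \<Phi>" using Y unfolding young_function_def by auto
  have "\<Phi> ((1 - 1/2) *\<^sub>R a + (1/2) *\<^sub>R b) \<le> (1 - 1/2) * \<Phi> a + (1/2) * \<Phi> b"
    using convex_onD[OF cv, of "1/2" a b] assms by auto
  then show ?thesis by (simp add: field_simps)
qed

lemma yf_cont:
  assumes Y: "young_function \<Phi>"
  shows "continuous_on UNIV (\<lambda>x. \<Phi> (max 0 x))"
proof (rule continuous_on_compose2[of "{0..}" \<Phi>])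
  show "continuous_on {0..} \<Phi>" using Y unfolding young_function_def by auto
  show "continuous_on UNIV (\<lambda>x::real. max 0 x)" by (intro continuous_intros)
qed auto

lemma orlicz_set_ne:
  fixes n :: "'a \<Rightarrow> real"
  assumes Y: "young_function \<Phi>" and nm: "n \<in> borel_measurable M" and n0: "\<And>s. 0 \<le> n s"
    and k0: "k0 > 0" and int: "integrable M (\<lambda>s. \<Phi> (k0 * n s))"
  shows "\<exists>k>0. (\<integral>\<^sup>+ s. ennreal (\<Phi> (n s / k)) \<partial>M) \<le> 1"
proof -
  define J where "J = (\<integral> s. \<Phi> (k0 * n s) \<partial>M)"
  have J0: "0 \<le> J" unfolding J_def
    by (intro integral_nonneg_AE AE_I2 yf_nonneg[OF Y]) (use k0 n0 in auto)
  define l where "l = 1 / (J + 1)"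
  have l0: "0 < l" "l \<le> 1" using J0 unfolding l_def by auto
  define k where "k = 1 / (l * k0)"
  have kpos: "k > 0" using l0 k0 unfolding k_def by auto
  have nk: "n s / k = l * (k0 * n s)" for s unfolding k_def by (simp add: field_simps)
  have "(\<integral>\<^sup>+ s. ennreal (\<Phi> (n s / k)) \<partial>M) \<le> (\<integral>\<^sup>+ s. ennreal (l * \<Phi> (k0 * n s)) \<partial>M)"
    by (intro nn_integral_mono ennreal_leI)
       (unfold nk, rule yf_scale[OF Y], use l0 k0 n0 in auto)
  also have "\<dots> = ennreal (\<integral> s. l * \<Phi> (k0 * n s) \<partial>M)"
    by (intro nn_integral_eq_integral integrable_mult_right int AE_I2 mult_nonneg_nonneg yf_nonneg[OF Y])
       (use l0 k0 n0 in auto)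
  also have "\<dots> = ennreal (l * J)" unfolding J_def by simp
  also have "\<dots> \<le> 1" using J0 unfolding l_def by (simp add: field_simps)
  finally show ?thesis using kpos by blast
qed

lemma orlicz_set_scale:
  assumes Y: "young_function \<Phi>" and K: "K > 0" and le: "\<And>s. norm (w2 s) \<le> K * norm (w1 s)"
    and k: "k > 0" "(\<integral>\<^sup>+ s. ennreal (\<Phi> (norm (w1 s) / k)) \<partial>M) \<le> 1"
  shows "(\<integral>\<^sup>+ s. ennreal (\<Phi> (norm (w2 s) / (K * k))) \<partial>M) \<le> 1"
proof -
  have "(\<integral>\<^sup>+ s. ennreal (\<Phi> (norm (w2 s) / (K * k))) \<partial>M) \<le> (\<integral>\<^sup>+ s. ennreal (\<Phi> (norm (w1 s) / k)) \<partial>M)"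
  proof (intro nn_integral_mono ennreal_leI yf_mono[OF Y])
    fix s
    show "0 \<le> norm (w2 s) / (K * k)" using K k by simp
    have "norm (w2 s) / (K * k) \<le> (K * norm (w1 s)) / (K * k)"
      by (rule divide_right_mono[OF le]) (use K k in simp)
    moreover have "(K * norm (w1 s)) / (K * k) = norm (w1 s) / k"
      using K by (rule mult_divide_mult_cancel_left[OF less_imp_neq[symmetric]])
    ultimately show "norm (w2 s) / (K * k) \<le> norm (w1 s) / k" by linarith
  qed
  then show ?thesis using k(2) by (rule order_trans)
qed

lemma inf_scale:
  fixes S T :: "real set"
  assumes ne: "S \<noteq> {}" and S0: "\<And>c. c \<in> S \<Longrightarrow> 0 \<le> c" and T0: "\<And>c. c \<in> T \<Longrightarrow> 0 \<le> c"
    and K: "K > 0" and ST: "\<And>c. c \<in> S \<Longrightarrow> K * c \<in> T"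
  shows "Inf T \<le> K * Inf S \<and> 0 \<le> Inf S"
proof
  have bT: "bdd_below T" unfolding bdd_below_def using T0 by blast
  have "Inf T / K \<le> c" if "c \<in> S" for c
  proof -
    have "Inf T \<le> K * c" using cInf_lower[OF ST[OF that] bT] .
    then show ?thesis using K by (simp add: divide_le_eq mult.commute)
  qed
  then have "Inf T / K \<le> Inf S" using ne by (intro cInf_greatest) auto
  then show "Inf T \<le> K * Inf S" using K by (simp add: divide_le_eq mult.commute)
  show "0 \<le> Inf S" using ne S0 by (intro cInf_greatest) auto
qed

lemma cont_normL:
  assumes L: "bounded_linear L"
  shows "continuous_on UNIV (\<lambda>p. norm (L (fst p)))"
  by (intro continuous_intros bounded_linear.continuous_on[OF L])

lemma zm_L1:
  fixes u :: "real \<Rightarrow> 'a::real_normed_vector" and L :: "'a \<Rightarrow> 'b::real_normed_vector"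
  assumes I: "I \<in> sets lebesgue" and L: "bounded_linear L" and K: "K > 0"
    and LK: "\<And>x. norm (L x) \<le> K * norm x"
    and bu: "bochner_measurable_on I u" and iu: "integrable (lebesgue_on I) (\<lambda>s. norm (u s))"
  shows "bochner_measurable_on I (\<lambda>s. L (u s)) \<and> integrable (lebesgue_on I) (\<lambda>s. norm (L (u s)))
     \<and> (\<integral> s. norm (L (u s)) \<partial>lebesgue_on I) \<le> K * (\<integral> s. norm (u s) \<partial>lebesgue_on I)
     \<and> 0 \<le> (\<integral> s. norm (u s) \<partial>lebesgue_on I)"
proof (intro conjI)
  show "bochner_measurable_on I (\<lambda>s. L (u s))" using bochner_map[OF bu L] .
  have m: "(\<lambda>s. norm (L (u s))) \<in> borel_measurable (lebesgue_on I)"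
    using bochner_meas2[OF I bu bu cont_normL[OF L]] by simp
  have iK: "integrable (lebesgue_on I) (\<lambda>s. K * norm (u s))"
    using iu by (rule integrable_mult_right)
  show il: "integrable (lebesgue_on I) (\<lambda>s. norm (L (u s)))"
  proof (rule Bochner_Integration.integrable_bound[OF iK m])
    show "AE x in lebesgue_on I. norm (norm (L (u x))) \<le> norm (K * norm (u x))"
      using LK K by (intro AE_I2) (simp add: abs_of_pos)
  qed
  have "(\<integral> s. norm (L (u s)) \<partial>lebesgue_on I) \<le> (\<integral> s. K * norm (u s) \<partial>lebesgue_on I)"
    using il iK LK by (intro integral_mono) auto
  then show "(\<integral> s. norm (L (u s)) \<partial>lebesgue_on I) \<le> K * (\<integral> s. norm (u s) \<partial>lebesgue_on I)"
    by simp
  show "0 \<le> (\<integral> s. norm (u s) \<partial>lebesgue_on I)" by simp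
qed

lemma zm_Linf:
  fixes u :: "real \<Rightarrow> 'a::real_normed_vector" and L :: "'a \<Rightarrow> 'b::real_normed_vector"
  assumes L: "bounded_linear L" and K: "K > 0"
    and LK: "\<And>x. norm (L x) \<le> K * norm x"
    and lu: "Linf_on I u"
  shows "Linf_on I (\<lambda>s. L (u s))
     \<and> Inf {C. C \<ge> 0 \<and> (AE s in lebesgue_on I. norm (L (u s)) \<le> C)}
         \<le> K * Inf {C. C \<ge> 0 \<and> (AE s in lebesgue_on I. norm (u s) \<le> C)}
     \<and> 0 \<le> Inf {C. C \<ge> 0 \<and> (AE s in lebesgue_on I. norm (u s) \<le> C)}"
proof -
  obtain C where bu: "bochner_measurable_on I u" and C: "AE s in lebesgue_on I. norm (u s) \<le> C"
    using lu unfolding Linf_on_def by blast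
  have C': "AE s in lebesgue_on I. norm (u s) \<le> max C 0"
    using C by (rule eventually_mono) simp
  have "Linf_on I (\<lambda>s. L (u s))"
    unfolding Linf_on_def
  proof (intro conjI exI)
    show "bochner_measurable_on I (\<lambda>s. L (u s))" using bochner_map[OF bu L] .
    show "AE s in lebesgue_on I. norm (L (u s)) \<le> K * C"
      using C
    proof (rule eventually_mono)
      fix s assume "norm (u s) \<le> C"
      then have "K * norm (u s) \<le> K * C" using K by simp
      then show "norm (L (u s)) \<le> K * C" using LK[of "u s"] by linarith
    qed
  qed
  moreover have "Inf {C. C \<ge> 0 \<and> (AE s in lebesgue_on I. norm (L (u s)) \<le> C)}
         \<le> K * Inf {C. C \<ge> 0 \<and> (AE s in lebesgue_on I. norm (u s) \<le> C)}
     \<and> 0 \<le> Inf {C. C \<ge> 0 \<and> (AE s in lebesgue_on I. norm (u s) \<le> C)}"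
  proof (rule inf_scale[OF _ _ _ K])
    show "{C. C \<ge> 0 \<and> (AE s in lebesgue_on I. norm (u s) \<le> C)} \<noteq> {}" using C' by force
    fix c
    show "c \<in> {C. C \<ge> 0 \<and> (AE s in lebesgue_on I. norm (u s) \<le> C)} \<Longrightarrow> 0 \<le> c" by simp
    show "c \<in> {C. C \<ge> 0 \<and> (AE s in lebesgue_on I. norm (L (u s)) \<le> C)} \<Longrightarrow> 0 \<le> c" by simp
    assume "c \<in> {C. C \<ge> 0 \<and> (AE s in lebesgue_on I. norm (u s) \<le> C)}"
    then have c: "c \<ge> 0" "AE s in lebesgue_on I. norm (u s) \<le> c" by auto
    have "AE s in lebesgue_on I. norm (L (u s)) \<le> K * c"
      using c(2)
    proof (rule eventually_mono)
      fix s assume "norm (u s) \<le> c"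
      then have "K * norm (u s) \<le> K * c" using K by simp
      then show "norm (L (u s)) \<le> K * c" using LK[of "u s"] by linarith
    qed
    then show "K * c \<in> {C. C \<ge> 0 \<and> (AE s in lebesgue_on I. norm (L (u s)) \<le> C)}"
      using c(1) K by simp
  qed
  ultimately show ?thesis by blast
qed

lemma zm_C:
  fixes u :: "real \<Rightarrow> 'a::real_normed_vector" and L :: "'a \<Rightarrow> 'b::real_normed_vector"
  assumes t: "0 < t" and L: "bounded_linear L" and K: "K > 0"
    and LK: "\<And>x. norm (L x) \<le> K * norm x"
    and cu: "continuous_on {0..t} u"
  shows "continuous_on {0..t} (\<lambda>s. L (u s))
     \<and> Sup ((\<lambda>s. norm (L (u s))) ` {0..t}) \<le> K * Sup ((\<lambda>s. norm (u s)) ` {0..t})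
     \<and> 0 \<le> Sup ((\<lambda>s. norm (u s)) ` {0..t})"
proof (intro conjI)
  show "continuous_on {0..t} (\<lambda>s. L (u s))" using bounded_linear.continuous_on[OF L cu] .
  have "compact ((\<lambda>s. norm (u s)) ` {0..t})"
    by (intro compact_continuous_image continuous_on_norm cu) simp
  then have bd: "bdd_above ((\<lambda>s. norm (u s)) ` {0..t})"
    by (intro bounded_imp_bdd_above compact_imp_bounded)
  have ne: "{0..t} \<noteq> {}" using t by simp
  have up: "norm (u s) \<le> Sup ((\<lambda>s. norm (u s)) ` {0..t})" if "s \<in> {0..t}" for s
    using cSup_upper[OF _ bd] that by blast
  show "Sup ((\<lambda>s. norm (L (u s))) ` {0..t}) \<le> K * Sup ((\<lambda>s. norm (u s)) ` {0..t})"
  proof (rule cSup_least)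
    show "(\<lambda>s. norm (L (u s))) ` {0..t} \<noteq> {}" using ne by simp
    fix y assume "y \<in> (\<lambda>s. norm (L (u s))) ` {0..t}"
    then obtain s where s: "s \<in> {0..t}" "y = norm (L (u s))" by blast
    have "K * norm (u s) \<le> K * Sup ((\<lambda>s. norm (u s)) ` {0..t})"
      using up[OF s(1)] K by simp
    then show "y \<le> K * Sup ((\<lambda>s. norm (u s)) ` {0..t})" using LK[of "u s"] s(2) by linarith
  qed
  show "0 \<le> Sup ((\<lambda>s. norm (u s)) ` {0..t})"
    using order_trans[OF norm_ge_zero up[of 0]] t by simp
qed

definition OS :: "(real \<Rightarrow> real) \<Rightarrow> real set \<Rightarrow> (real \<Rightarrow> 'a::real_normed_vector) \<Rightarrow> real set" where
  "OS \<Phi> I w = {k. k > 0 \<and> (\<integral>\<^sup>+ s. ennreal (\<Phi> (norm (w s) / k)) \<partial>lebesgue_on I) \<le> 1}"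

lemma orlicz_norm_OS: "orlicz_norm \<Phi> I w = Inf (OS \<Phi> I w)"
  unfolding orlicz_norm_def OS_def by simp

lemma OS_ne:
  fixes w :: "real \<Rightarrow> 'a::real_normed_vector"
  assumes Y: "young_function \<Phi>" and m: "(\<lambda>s. norm (w s)) \<in> borel_measurable (lebesgue_on I)"
    and k0: "k0 > 0" and int: "integrable (lebesgue_on I) (\<lambda>s. \<Phi> (norm (k0 *\<^sub>R w s)))"
  shows "OS \<Phi> I w \<noteq> {}"
proof -
  have "integrable (lebesgue_on I) (\<lambda>s. \<Phi> (k0 * norm (w s)))"
    using int k0 by (simp add: abs_of_pos)
  from orlicz_set_ne[OF Y m _ k0 this]
  obtain k where "k > 0" "(\<integral>\<^sup>+ s. ennreal (\<Phi> (norm (w s) / k)) \<partial>lebesgue_on I) \<le> 1" by auto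
  then show ?thesis unfolding OS_def by blast
qed

lemma OS_le:
  fixes w1 :: "real \<Rightarrow> 'a::real_normed_vector" and w2 :: "real \<Rightarrow> 'b::real_normed_vector"
  assumes Y: "young_function \<Phi>" and ne: "OS \<Phi> I w1 \<noteq> {}" and K: "K > 0"
    and le: "\<And>s. norm (w2 s) \<le> K * norm (w1 s)"
  shows "orlicz_norm \<Phi> I w2 \<le> K * orlicz_norm \<Phi> I w1 \<and> 0 \<le> orlicz_norm \<Phi> I w1"
  unfolding orlicz_norm_OS
proof (rule inf_scale[OF ne _ _ K])
  show "c \<in> OS \<Phi> I w1 \<Longrightarrow> 0 \<le> c" for c unfolding OS_def by auto
  show "c \<in> OS \<Phi> I w2 \<Longrightarrow> 0 \<le> c" for c unfolding OS_def by auto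
  fix c assume "c \<in> OS \<Phi> I w1"
  then have c: "c > 0" "(\<integral>\<^sup>+ s. ennreal (\<Phi> (norm (w1 s) / c)) \<partial>lebesgue_on I) \<le> 1"
    unfolding OS_def by auto
  show "K * c \<in> OS \<Phi> I w2"
    using orlicz_set_scale[OF Y K le c] K c(1) unfolding OS_def by simp
qed

lemma OS_small:
  assumes ne: "OS \<Phi> I w \<noteq> {}" and lt: "orlicz_norm \<Phi> I w < e"
  shows "\<exists>k. k \<in> OS \<Phi> I w \<and> k < e"
  using cInf_lessD[OF ne] lt unfolding orlicz_norm_OS by blast

lemma OS_upper:
  assumes "k \<in> OS \<Phi> I w" shows "orlicz_norm \<Phi> I w \<le> k"
proof -
  have "bdd_below (OS \<Phi> I w)" unfolding bdd_below_def OS_def by (intro exI[of _ 0]) auto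
  then show ?thesis unfolding orlicz_norm_OS using cInf_lower[OF assms] by blast
qed

lemma cont_Phi:
  assumes Y: "young_function \<Phi>" and c: "continuous_on UNIV f"
  shows "continuous_on UNIV (\<lambda>x. \<Phi> (max 0 (f x)))"
  using continuous_on_compose2[OF yf_cont[OF Y] c] by simp

lemma zm_E:
  fixes u :: "real \<Rightarrow> 'a::real_normed_vector" and L :: "'a \<Rightarrow> 'b::real_normed_vector"
  assumes Y: "young_function \<Phi>" and I: "I \<in> sets lebesgue" and fm: "finite_measure (lebesgue_on I)"
    and L: "bounded_linear L" and K: "K > 0"
    and LK: "\<And>x. norm (L x) \<le> K * norm x"
    and eu: "orlicz_E \<Phi> I u"
  shows "orlicz_E \<Phi> I (\<lambda>s. L (u s)) \<and> orlicz_norm \<Phi> I (\<lambda>s. L (u s)) \<le> K * orlicz_norm \<Phi> I u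
     \<and> 0 \<le> orlicz_norm \<Phi> I u"
proof -
  obtain k0 where bu: "bochner_measurable_on I u" and k0: "k0 > 0"
    and i0: "integrable (lebesgue_on I) (\<lambda>s. \<Phi> (norm (k0 *\<^sub>R u s)))"
    using eu unfolding orlicz_E_def orlicz_L_def by blast
  have appr: "\<forall>\<epsilon>>0. \<exists>v. Linf_on I v \<and> bounded_ess_support I v \<and> orlicz_norm \<Phi> I (\<lambda>s. u s - v s) < \<epsilon>"
    using eu unfolding orlicz_E_def by blast
  have mnu: "(\<lambda>s. norm (u s)) \<in> borel_measurable (lebesgue_on I)"
    using bochner_meas2[OF I bu bu, of "\<lambda>a b. norm a"] by (simp add: continuous_on_norm continuous_on_fst)
  have neu: "OS \<Phi> I u \<noteq> {}" by (rule OS_ne[OF Y mnu k0 i0])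
  have le1: "orlicz_norm \<Phi> I (\<lambda>s. L (u s)) \<le> K * orlicz_norm \<Phi> I u \<and> 0 \<le> orlicz_norm \<Phi> I u"
    by (rule OS_le[OF Y neu K LK])
  define k where "k = k0 / K"
  have kpos: "k > 0" unfolding k_def using k0 K by simp
  have nk: "norm (k *\<^sub>R L x) \<le> norm (k0 *\<^sub>R x)" for x
  proof -
    have "norm (k *\<^sub>R L x) = k * norm (L x)" using kpos by simp
    also have "\<dots> \<le> k * (K * norm x)" using LK[of x] kpos by (simp add: mult_left_mono)
    also have "\<dots> = norm (k0 *\<^sub>R x)" unfolding k_def using K k0 by simp
    finally show ?thesis .
  qed
  have mk: "(\<lambda>s. \<Phi> (norm (k *\<^sub>R L (u s)))) \<in> borel_measurable (lebesgue_on I)"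
  proof -
    have c: "continuous_on UNIV (\<lambda>p. \<Phi> (max 0 (norm (k *\<^sub>R L (fst p)))))"
      by (rule cont_Phi[OF Y]) (intro continuous_intros bounded_linear.continuous_on[OF L])
    show ?thesis using bochner_meas2[OF I bu bu c] by simp
  qed
  have ik: "integrable (lebesgue_on I) (\<lambda>s. \<Phi> (norm (k *\<^sub>R L (u s))))"
  proof (rule Bochner_Integration.integrable_bound[OF i0 mk])
    show "AE x in lebesgue_on I. norm (\<Phi> (norm (k *\<^sub>R L (u x)))) \<le> norm (\<Phi> (norm (k0 *\<^sub>R u x)))"
    proof (rule AE_I2)
      fix x
      have "\<Phi> (norm (k *\<^sub>R L (u x))) \<le> \<Phi> (norm (k0 *\<^sub>R u x))"
        by (rule yf_mono[OF Y norm_ge_zero nk])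
      then show "norm (\<Phi> (norm (k *\<^sub>R L (u x)))) \<le> norm (\<Phi> (norm (k0 *\<^sub>R u x)))"
        using yf_nonneg[OF Y norm_ge_zero, of "k *\<^sub>R L (u x)"] yf_nonneg[OF Y norm_ge_zero, of "k0 *\<^sub>R u x"]
        by simp
    qed
  qed
  have LL: "orlicz_L \<Phi> I (\<lambda>s. L (u s))"
    unfolding orlicz_L_def using bochner_map[OF bu L] kpos ik by blast
  have "\<exists>v. Linf_on I v \<and> bounded_ess_support I v \<and> orlicz_norm \<Phi> I (\<lambda>s. L (u s) - v s) < \<epsilon>"
    if e: "\<epsilon> > 0" for \<epsilon>
  proof -
    obtain v where lv: "Linf_on I v" and bv: "bounded_ess_support I v"
      and nv: "orlicz_norm \<Phi> I (\<lambda>s. u s - v s) < \<epsilon> / K"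
      using appr e K by (meson divide_pos_pos)
    obtain C where bvm: "bochner_measurable_on I v" and C: "AE s in lebesgue_on I. norm (v s) \<le> C"
      using lv unfolding Linf_on_def by blast
    define C' where "C' = max C 0"
    have C': "AE s in lebesgue_on I. norm (v s) \<le> C'" using C unfolding C'_def by (rule eventually_mono) simp
    have C'0: "0 \<le> C'" unfolding C'_def by simp
    have mnuv: "(\<lambda>s. norm (u s - v s)) \<in> borel_measurable (lebesgue_on I)"
      using bochner_meas2[OF I bu bvm, of "\<lambda>a b. norm (a - b)"]
      by (simp add: continuous_on_norm continuous_on_diff continuous_on_fst continuous_on_snd)
    define h where "h = k0 / 2"
    have h: "h > 0" unfolding h_def using k0 by simp
    have mh: "(\<lambda>s. \<Phi> (norm (h *\<^sub>R (u s - v s)))) \<in> borel_measurable (lebesgue_on I)"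
    proof -
      have c: "continuous_on UNIV (\<lambda>p. \<Phi> (max 0 (norm (h *\<^sub>R (fst p - snd p)))))"
        by (rule cont_Phi[OF Y]) (intro continuous_intros)
      show ?thesis using bochner_meas2[OF I bu bvm c] by simp
    qed
    have ib: "integrable (lebesgue_on I) (\<lambda>s. (\<Phi> (norm (k0 *\<^sub>R u s)) + \<Phi> (k0 * C')) / 2)"
    proof -
      interpret finite_measure "lebesgue_on I" by (rule fm)
      have "integrable (lebesgue_on I) (\<lambda>s. \<Phi> (norm (k0 *\<^sub>R u s)) + \<Phi> (k0 * C'))"
        by (rule Bochner_Integration.integrable_add[OF i0 integrable_const])
      then show ?thesis by (rule integrable_divide_zero)
    qed
    have ih: "integrable (lebesgue_on I) (\<lambda>s. \<Phi> (norm (h *\<^sub>R (u s - v s))))"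
    proof (rule Bochner_Integration.integrable_bound[OF ib mh])
      show "AE x in lebesgue_on I. norm (\<Phi> (norm (h *\<^sub>R (u x - v x))))
              \<le> norm ((\<Phi> (norm (k0 *\<^sub>R u x)) + \<Phi> (k0 * C')) / 2)"
        using C'
      proof (rule eventually_mono)
        fix x assume vx: "norm (v x) \<le> C'"
        have "norm (h *\<^sub>R (u x - v x)) = h * norm (u x - v x)" using h by simp
        also have "\<dots> \<le> h * (norm (u x) + norm (v x))"
          using h norm_triangle_ineq4[of "u x" "v x"] by (simp add: mult_left_mono)
        also have "\<dots> \<le> h * (norm (u x) + C')" using h vx by (simp add: mult_left_mono)
        also have "\<dots> = (norm (k0 *\<^sub>R u x) + k0 * C') / 2"
          unfolding h_def using k0 by (simp add: field_simps)
        finally have a: "norm (h *\<^sub>R (u x - v x)) \<le> (norm (k0 *\<^sub>R u x) + k0 * C') / 2" .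
        have "\<Phi> (norm (h *\<^sub>R (u x - v x))) \<le> \<Phi> ((norm (k0 *\<^sub>R u x) + k0 * C') / 2)"
          by (rule yf_mono[OF Y norm_ge_zero a])
        also have "\<dots> \<le> (\<Phi> (norm (k0 *\<^sub>R u x)) + \<Phi> (k0 * C')) / 2"
          by (rule yf_mid[OF Y]) (use k0 C'0 in auto)
        finally have b: "\<Phi> (norm (h *\<^sub>R (u x - v x))) \<le> (\<Phi> (norm (k0 *\<^sub>R u x)) + \<Phi> (k0 * C')) / 2" .
        have p1: "0 \<le> \<Phi> (norm (h *\<^sub>R (u x - v x)))" by (rule yf_nonneg[OF Y norm_ge_zero])
        then show "norm (\<Phi> (norm (h *\<^sub>R (u x - v x)))) \<le> norm ((\<Phi> (norm (k0 *\<^sub>R u x)) + \<Phi> (k0 * C')) / 2)"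
          using b by simp
      qed
    qed
    have neuv: "OS \<Phi> I (\<lambda>s. u s - v s) \<noteq> {}" by (rule OS_ne[OF Y mnuv h ih])
    obtain kk where kk: "kk \<in> OS \<Phi> I (\<lambda>s. u s - v s)" "kk < \<epsilon> / K"
      using OS_small[OF neuv nv] by blast
    have kkpos: "kk > 0" using kk(1) unfolding OS_def by simp
    have leL: "norm (L (u s) - L (v s)) \<le> K * norm (u s - v s)" for s
      using LK[of "u s - v s"] by (simp add: linear_diff[OF bounded_linear.linear[OF L]])
    have "K * kk \<in> OS \<Phi> I (\<lambda>s. L (u s) - L (v s))"
      using kk(1) orlicz_set_scale[OF Y K leL kkpos] K kkpos unfolding OS_def by simp
    then have "orlicz_norm \<Phi> I (\<lambda>s. L (u s) - L (v s)) \<le> K * kk" by (rule OS_upper)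
    also have "\<dots> < \<epsilon>" using kk(2) K by (simp add: less_divide_eq mult.commute)
    finally have fin: "orlicz_norm \<Phi> I (\<lambda>s. L (u s) - L (v s)) < \<epsilon>" .
    have lLv: "Linf_on I (\<lambda>s. L (v s))"
      using zm_Linf[OF L K LK lv] by blast
    have bLv: "bounded_ess_support I (\<lambda>s. L (v s))"
    proof -
      obtain R where R: "AE s in lebesgue_on I. \<bar>s\<bar> > R \<longrightarrow> v s = 0"
        using bv unfolding bounded_ess_support_def by blast
      have "AE s in lebesgue_on I. \<bar>s\<bar> > R \<longrightarrow> L (v s) = 0"
        using R by (rule eventually_mono) (simp add: linear_0[OF bounded_linear.linear[OF L]])
      then show ?thesis unfolding bounded_ess_support_def by blast
    qed
    show ?thesis using lLv bLv fin by blast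
  qed
  then have "orlicz_E \<Phi> I (\<lambda>s. L (u s))" unfolding orlicz_E_def using LL by blast
  then show ?thesis using le1 by blast
qed

lemma span_key_ineq:
  fixes b :: "'a::real_normed_vector"
  assumes "w \<in> span T"
  shows "\<bar>a\<bar> * infdist b (span T) \<le> norm (w + a *\<^sub>R b)"
proof (cases "a = 0")
  case True then show ?thesis by simp
next
  case False
  have mem: "(- (1/a)) *\<^sub>R w \<in> span T" using assms span_scale by blast
  have "norm (w + a *\<^sub>R b) = \<bar>a\<bar> * norm (b - (- (1/a)) *\<^sub>R w)"
  proof -
    have "w + a *\<^sub>R b = a *\<^sub>R (b - (- (1/a)) *\<^sub>R w)"
      using False by (simp add: algebra_simps)
    then show ?thesis by simp
  qed
  also have "\<dots> = \<bar>a\<bar> * dist b ((- (1/a)) *\<^sub>R w)" by (simp add: dist_norm)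
  finally show ?thesis
    using infdist_le[OF mem, of b] by (simp add: mult_left_mono)
qed

lemma closed_span_finite:
  fixes S :: "'a::real_normed_vector set"
  assumes "finite S" shows "closed (span S)"
  using assms
proof (induction rule: finite_induct)
  case empty then show ?case by simp
next
  case (insert b S)
  show ?case
  proof (cases "b \<in> span S")
    case True then show ?thesis using insert by (simp add: span_redundant)
  next
    case False
    define d where "d = infdist b (span S)"
    have d: "d > 0" unfolding d_def
      using infdist_pos_not_in_closed[OF insert(3) _ False] span_zero by blast
    show ?thesis
    proof (subst closed_sequential_limits, intro allI impI, elim conjE)
      fix x l assume xin: "\<forall>n. x n \<in> span (insert b S)" and lim: "x \<longlonglongrightarrow> l"
      have "\<forall>n. \<exists>a. x n - a *\<^sub>R b \<in> span S" using xin span_breakdown_eq[of _ b S] by blast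
      then obtain a where a: "\<And>n. x n - a n *\<^sub>R b \<in> span S" by metis
      have ineq: "\<bar>a n - a m\<bar> \<le> norm (x n - x m) / d" for n m
      proof -
        have "(x n - a n *\<^sub>R b) - (x m - a m *\<^sub>R b) \<in> span S" using a span_diff by blast
        from span_key_ineq[OF this, of "a n - a m" b]
        have "\<bar>a n - a m\<bar> * d \<le> norm (x n - x m)"
          unfolding d_def by (simp add: algebra_simps)
        then show ?thesis using d by (simp add: pos_le_divide_eq)
      qed
      have "Cauchy a"
      proof (rule metric_CauchyI)
        fix e :: real assume "e > 0"
        have "Cauchy x" using lim LIMSEQ_imp_Cauchy by blast
        then obtain M where M: "\<And>m n. m \<ge> M \<Longrightarrow> n \<ge> M \<Longrightarrow> dist (x m) (x n) < e * d"
          using metric_CauchyD[of x "e*d"] \<open>e>0\<close> d by auto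
        show "\<exists>M. \<forall>m\<ge>M. \<forall>n\<ge>M. dist (a m) (a n) < e"
        proof (intro exI allI impI)
          fix m n assume "m \<ge> M" "n \<ge> M"
          have "dist (a m) (a n) \<le> norm (x m - x n) / d" using ineq by (simp add: dist_real_def)
          also have "\<dots> < e" using M[OF \<open>m\<ge>M\<close> \<open>n\<ge>M\<close>] d by (simp add: dist_norm divide_less_eq)
          finally show "dist (a m) (a n) < e" .
        qed
      qed
      then obtain \<alpha> where al: "a \<longlonglongrightarrow> \<alpha>" using Cauchy_convergent_iff convergent_def by blast
      have "(\<lambda>n. x n - a n *\<^sub>R b) \<longlonglongrightarrow> l - \<alpha> *\<^sub>R b"
        by (intro tendsto_intros lim al)
      then have "l - \<alpha> *\<^sub>R b \<in> span S"
        by (rule closed_sequentially[OF insert(3) a])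
      then show "l \<in> span (insert b S)" using span_breakdown_eq[of l b S] by blast
    qed
  qed
qed

lemma coord_bound:
  fixes Bs :: "'a::real_normed_vector set"
  assumes fin: "finite Bs" and ind: "independent Bs" and b: "b \<in> Bs"
  shows "\<exists>C. \<forall>x\<in>span Bs. \<bar>representation Bs x b\<bar> \<le> C * norm x"
proof -
  define W where "W = span (Bs - {b})"
  have clW: "closed W" unfolding W_def by (simp add: closed_span_finite fin)
  have bW: "b \<notin> W" unfolding W_def using ind b dependent_def by blast
  define d where "d = infdist b W"
  have d: "d > 0" unfolding d_def
    using infdist_pos_not_in_closed[OF clW _ bW] span_zero unfolding W_def by blast
  show ?thesis
  proof (intro exI ballI)
    fix x assume x: "x \<in> span Bs"
    define S where "S = (\<Sum>b'\<in>Bs - {b}. representation Bs x b' *\<^sub>R b')"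
    define a where "a = representation Bs x b"
    have e1: "(\<Sum>b'\<in>Bs. representation Bs x b' *\<^sub>R b') = x"
      by (rule sum_representation_eq[OF ind x fin order_refl])
    have e2: "(\<Sum>b'\<in>Bs. representation Bs x b' *\<^sub>R b') = a *\<^sub>R b + S"
      unfolding a_def S_def using fin b by (rule sum.remove)
    have xe: "S + a *\<^sub>R b = x" using e1 e2 by (metis add.commute)
    have "S \<in> span (Bs - {b})"
      unfolding S_def by (intro span_sum span_scale span_base) auto
    from span_key_ineq[OF this, of a b]
    have "\<bar>a\<bar> * d \<le> norm x"
      unfolding xe d_def W_def .
    then have "\<bar>representation Bs x b\<bar> * d \<le> norm x" unfolding a_def .
    then show "\<bar>representation Bs x b\<bar> \<le> (1/d) * norm x"
      using d by (simp add: pos_le_divide_eq mult.commute)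
  qed
qed

lemma fd_coords:
  assumes "complex_finite_dim (UNIV :: 'u::complex_normed_space set)"
  shows "\<exists>(Bs::'u set) r. finite Bs \<and> (\<forall>b\<in>Bs. bounded_linear (r b)) \<and>
            (\<forall>x. x = (\<Sum>b\<in>Bs. r b x *\<^sub>R b))"
proof -
  obtain S :: "'u set" where S: "finite S" "\<And>x. \<exists>c. x = (\<Sum>s\<in>S. cscale (c s) s)"
    using assms unfolding complex_finite_dim_def by blast
  define S' where "S' = S \<union> cscale \<i> ` S"
  have finS': "finite S'" using S(1) unfolding S'_def by simp
  have cs: "cscale c s \<in> span S'" if "s \<in> S" for c s
  proof -
    have ce: "complex_of_real (Re c) + complex_of_real (Im c) * \<i> = c"
      by (simp add: complex_eq_iff)
    have "cscale c s = cscale (complex_of_real (Re c) + complex_of_real (Im c) * \<i>) s"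
      by (simp only: ce)
    also have "\<dots> = Re c *\<^sub>R s + Im c *\<^sub>R cscale \<i> s"
      by (simp add: cscale_add_left cscale_cscale[symmetric] cscale_of_real)
    finally have eq: "cscale c s = Re c *\<^sub>R s + Im c *\<^sub>R cscale \<i> s" .
    have m: "s \<in> S'" "cscale \<i> s \<in> S'" unfolding S'_def using that by auto
    have "Re c *\<^sub>R s + Im c *\<^sub>R cscale \<i> s \<in> span S'"
      by (intro span_add span_scale span_base m)
    then show ?thesis by (simp only: eq)
  qed
  have UNIVsp: "x \<in> span S'" for x
  proof -
    obtain c where "x = (\<Sum>s\<in>S. cscale (c s) s)" using S(2) by blast
    then show ?thesis using cs by (simp add: span_sum)
  qed
  obtain Bs where Bs: "Bs \<subseteq> S'" "independent Bs" "S' \<subseteq> span Bs"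
    using maximal_independent_subset by blast
  have fin: "finite Bs" using Bs(1) finS' finite_subset by blast
  have spB: "x \<in> span Bs" for x
  proof -
    have "span S' \<subseteq> span Bs" using Bs(3) by (rule span_minimal) simp
    then show ?thesis using UNIVsp[of x] by blast
  qed
  define r where "r b x = representation Bs x b" for b x
  show ?thesis
  proof (intro exI conjI ballI allI)
    show "finite Bs" by (rule fin)
    fix b assume b: "b \<in> Bs"
    obtain C where C: "\<And>x. \<bar>representation Bs x b\<bar> \<le> C * norm x"
      using coord_bound[OF fin Bs(2) b] spB by blast
    show "bounded_linear (r b)"
    proof (rule bounded_linear_intro[where K = C])
      show "r b (x + y) = r b x + r b y" for x y
        unfolding r_def using representation_add[OF Bs(2) spB spB] by simp
      show "r b (c *\<^sub>R x) = c *\<^sub>R r b x" for c x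
        unfolding r_def using representation_scale[OF Bs(2) spB] by simp
      show "norm (r b x) \<le> norm x * C" for x
        unfolding r_def using C[of x] by (simp add: mult.commute)
    qed
  next
    fix x show "x = (\<Sum>b\<in>Bs. r b x *\<^sub>R b)"
      unfolding r_def using sum_representation_eq[OF Bs(2) spB fin order_refl] by simp
  qed
qed

lemma zmem_map:
  fixes u :: "real \<Rightarrow> 'a::real_normed_vector" and L :: "'a \<Rightarrow> 'b::real_normed_vector"
  assumes Z: "valid_zspace Z" and t: "0 < t" and L: "bounded_linear L" and K: "K > 0"
    and LK: "\<And>x. norm (L x) \<le> K * norm x" and zu: "zmem Z {0..t} u"
  shows "zmem Z {0..t} (\<lambda>s. L (u s)) \<and> znorm Z {0..t} (\<lambda>s. L (u s)) \<le> K * znorm Z {0..t} u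
    \<and> 0 \<le> znorm Z {0..t} u"
proof -
  have Il: "{0..t} \<in> lmeasurable" using lmeasurable_cbox[of 0 t] by (simp add: cbox_interval)
  have I: "{0..t} \<in> sets lebesgue" using Il by (rule fmeasurableD)
  have fm: "finite_measure (lebesgue_on {0..t})" using Il by (rule finite_measure_lebesgue_on)
  show ?thesis
  proof (cases Z)
    case (ZE \<Phi>)
    then have Y: "young_function \<Phi>" using Z by (simp add: valid_zspace_def)
    show ?thesis using zm_E[OF Y I fm L K LK] zu ZE by (simp add: zmem_def znorm_def)
  next
    case ZL1
    show ?thesis using zm_L1[OF I L K LK] zu ZL1 by (simp add: zmem_def znorm_def)
  next
    case ZLinf
    show ?thesis using zm_Linf[OF L K LK] zu ZLinf by (simp add: zmem_def znorm_def)
  next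
    case ZC
    show ?thesis using zm_C[OF t L K LK] zu ZC by (simp add: zmem_def znorm_def)
  qed
qed

lemma znorm_nonneg:
  fixes u :: "real \<Rightarrow> 'a::real_normed_vector"
  assumes "valid_zspace Z" "0 < t" "zmem Z {0..t} u"
  shows "0 \<le> znorm Z {0..t} u"
  using zmem_map[OF assms(1,2) bounded_linear_ident, of 1 u] assms(3) by simp

lemma cscale_bl:
  shows "bounded_linear (\<lambda>z::complex. cscale z (f::'u::complex_normed_space))"
proof (rule bounded_linear_intro[where K = "norm f"])
  show "cscale (x + y) f = cscale x f + cscale y f" for x y by (rule cscale_add_left)
  show "cscale (r *\<^sub>R x) f = r *\<^sub>R cscale x f" for r x
    by (simp add: scaleR_conv_of_real cscale_cscale[symmetric] cscale_of_real)
  show "norm (cscale x f) \<le> norm x * norm f" for x by (simp add: norm_cscale)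
qed

lemma cscale_bound:
  "norm (cscale z (f::'u::complex_normed_space)) \<le> (norm f + 1) * norm z"
  by (simp add: norm_cscale algebra_simps)

theorem proposition4:
  fixes T :: "real \<Rightarrow> 'x::{complex_normed_space,banach} \<Rightarrow> 'x"
    and \<beta> :: complex
    and j :: "'x \<Rightarrow> 'm::{complex_normed_space,banach}"
    and Tm :: "real \<Rightarrow> 'm \<Rightarrow> 'm"
    and B :: "'u::{complex_normed_space,banach} \<Rightarrow> 'm"
    and Z :: zspace
  assumes "c0_semigroup T"
    and ext: "extrapolation_space T \<beta> j Tm"
    and fd: "complex_finite_dim (UNIV :: 'u set)"
    and Z: "valid_zspace Z"
    and Bcb: "cbounded_linear B"
  shows "(z_admissible Z Tm j B \<longleftrightarrow>
            (\<forall>f. z_admissible Z Tm j (\<lambda>z::complex. cscale z (B f))))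
       \<and> (inf_z_admissible Z Tm j B \<longleftrightarrow>
            (\<forall>f. inf_z_admissible Z Tm j (\<lambda>z::complex. cscale z (B f))))"
proof -
  note E = ext[unfolded extrapolation_space_def]
  have jadd: "\<And>x y. j (x + y) = j x + j y"
    using E[THEN conjunct2, THEN conjunct1] by blast
  have jc: "\<And>c x. j (cscale c x) = cscale c (j x)"
    using E[THEN conjunct2, THEN conjunct2, THEN conjunct1] by blast
  have Etm: "\<forall>t\<ge>0. cbounded_linear (Tm t) \<and> (\<forall>x. Tm t (j x) = j (T t x))"
    using E[THEN conjunct2, THEN conjunct2, THEN conjunct2, THEN conjunct2, THEN conjunct2] .
  have Tm: "bounded_linear (Tm s)" if "0 \<le> s" for s
    using Etm that unfolding cbounded_linear_def by blast
  have Bl: "bounded_linear B" and Bc: "\<And>c x. B (cscale c x) = cscale c (B x)"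
    using Bcb unfolding cbounded_linear_def by auto
  have jlin: "linear j"
  proof (rule linearI)
    show "j (x + y) = j x + j y" for x y by (rule jadd)
    show "j (c *\<^sub>R x) = c *\<^sub>R j x" for c x
      using jc[of "complex_of_real c" x] by (simp add: cscale_of_real)
  qed
  from fd_coords[OF fd] obtain Bs :: "'u set" and r where
    BR: "finite Bs \<and> (\<forall>b\<in>Bs. bounded_linear (r b)) \<and> (\<forall>x. x = (\<Sum>b\<in>Bs. r b x *\<^sub>R b))"
    by (elim exE) (erule that)
  have fin: "finite Bs" using BR by (rule conjunct1)
  have rbl: "\<And>b. b \<in> Bs \<Longrightarrow> bounded_linear (r b)" using BR[THEN conjunct2, THEN conjunct1] by (rule bspec)
  have dec: "\<And>x. x = (\<Sum>b\<in>Bs. r b x *\<^sub>R b)" using BR[THEN conjunct2, THEN conjunct2] by (rule spec)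
  define Lb where "Lb b x = complex_of_real (r b x)" for b x
  have Lbl: "bounded_linear (Lb b)" if "b \<in> Bs" for b
    unfolding Lb_def by (rule bounded_linear_compose[OF bounded_linear_of_real rbl[OF that]])
  have "\<forall>b\<in>Bs. \<exists>K>0. \<forall>x. norm (Lb b x) \<le> K * norm x"
  proof
    fix b assume "b \<in> Bs"
    from bounded_linear.pos_bounded[OF Lbl[OF this]]
    obtain K where "K > 0" "\<And>x. norm (Lb b x) \<le> norm x * K" by blast
    then show "\<exists>K>0. \<forall>x. norm (Lb b x) \<le> K * norm x" by (metis mult.commute)
  qed
  from bchoice[OF this] obtain Kb where Kb: "\<And>b. b \<in> Bs \<Longrightarrow> Kb b > 0" "\<And>b x. b \<in> Bs \<Longrightarrow> norm (Lb b x) \<le> Kb b * norm x"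
    by blast
  have integrand: "Tm s (B (u s)) = (\<Sum>b\<in>Bs. Tm s (cscale (Lb b (u s)) (B b)))"
    if s: "s \<in> {0..t}" for s t and u :: "real \<Rightarrow> 'u"
  proof -
    have l1: "linear (Tm s)" using Tm[of s] s bounded_linear.linear by auto
    have l2: "linear B" using Bl bounded_linear.linear by auto
    have "Tm s (B (u s)) = Tm s (B (\<Sum>b\<in>Bs. r b (u s) *\<^sub>R b))" by (rule arg_cong[OF dec[of "u s"], of "\<lambda>y. Tm s (B y)"])
    also have "\<dots> = (\<Sum>b\<in>Bs. r b (u s) *\<^sub>R Tm s (B b))"
      by (simp add: linear_sum[OF l2] linear_sum[OF l1] linear_scale[OF l2] linear_scale[OF l1])
    also have "\<dots> = (\<Sum>b\<in>Bs. Tm s (cscale (Lb b (u s)) (B b)))"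
      unfolding Lb_def by (simp add: cscale_of_real linear_scale[OF l1])
    finally show ?thesis .
  qed
  have part1: "z_admissible Z Tm j B \<longleftrightarrow> (\<forall>f. z_admissible Z Tm j (\<lambda>z::complex. cscale z (B f)))"
  proof
    assume adm: "z_admissible Z Tm j B"
    show "\<forall>f. z_admissible Z Tm j (\<lambda>z::complex. cscale z (B f))"
      unfolding z_admissible_def
    proof (intro allI impI)
      fix f :: 'u and t and u :: "real \<Rightarrow> complex" assume t: "0 < t" and zu: "zmem Z {0..t} u"
      have Kf: "0 < norm f + 1" using norm_ge_zero[of f] by linarith
      have "zmem Z {0..t} (\<lambda>s. cscale (u s) f)"
        using zmem_map[OF Z t cscale_bl[of f] Kf cscale_bound zu] by simp
      then obtain x where "((\<lambda>s. Tm s (B (cscale (u s) f))) has_integral j x) {0..t}"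
        using adm t unfolding z_admissible_def by blast
      then show "\<exists>x. ((\<lambda>s. Tm s (cscale (u s) (B f))) has_integral j x) {0..t}"
        by (auto simp: Bc)
    qed
  next
    assume adm: "\<forall>f. z_admissible Z Tm j (\<lambda>z::complex. cscale z (B f))"
    show "z_admissible Z Tm j B"
      unfolding z_admissible_def
    proof (intro allI impI)
      fix t and u :: "real \<Rightarrow> 'u" assume t: "0 < t" and zu: "zmem Z {0..t} u"
      have "\<forall>b\<in>Bs. \<exists>x. ((\<lambda>s. Tm s (cscale (Lb b (u s)) (B b))) has_integral j x) {0..t}"
      proof
        fix b assume b: "b \<in> Bs"
        have "zmem Z {0..t} (\<lambda>s. Lb b (u s))"
          using zmem_map[OF Z t Lbl[OF b] Kb(1)[OF b] Kb(2)[OF b] zu] by simp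
        then show "\<exists>x. ((\<lambda>s. Tm s (cscale (Lb b (u s)) (B b))) has_integral j x) {0..t}"
          using adm t unfolding z_admissible_def by blast
      qed
      from bchoice[OF this] obtain xf where xf: "\<And>b. b \<in> Bs \<Longrightarrow> ((\<lambda>s. Tm s (cscale (Lb b (u s)) (B b))) has_integral j (xf b)) {0..t}"
        by blast
      have "((\<lambda>s. \<Sum>b\<in>Bs. Tm s (cscale (Lb b (u s)) (B b))) has_integral (\<Sum>b\<in>Bs. j (xf b))) {0..t}"
        by (rule has_integral_sum[OF fin xf])
      then have "((\<lambda>s. Tm s (B (u s))) has_integral j (\<Sum>b\<in>Bs. xf b)) {0..t}"
        using has_integral_cong[of "{0..t}" "\<lambda>s. Tm s (B (u s))" "\<lambda>s. \<Sum>b\<in>Bs. Tm s (cscale (Lb b (u s)) (B b))", OF integrand[of _ t u]]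
        by (simp add: linear_sum[OF jlin])
      then show "\<exists>x. ((\<lambda>s. Tm s (B (u s))) has_integral j x) {0..t}" by blast
    qed
  qed
  have part2: "inf_z_admissible Z Tm j B \<longleftrightarrow> (\<forall>f. inf_z_admissible Z Tm j (\<lambda>z::complex. cscale z (B f)))"
  proof
    assume "inf_z_admissible Z Tm j B"
    then obtain M where adm: "\<And>t u. 0 < t \<Longrightarrow> zmem Z {0..t} (u :: real \<Rightarrow> 'u) \<Longrightarrow>
        \<exists>x. ((\<lambda>s. Tm s (B (u s))) has_integral j x) {0..t} \<and> norm x \<le> M * znorm Z {0..t} u"
      unfolding inf_z_admissible_def by blast
    show "\<forall>f. inf_z_admissible Z Tm j (\<lambda>z::complex. cscale z (B f))"
    proof
      fix f :: 'u
      have Kf: "0 < norm f + 1" using norm_ge_zero[of f] by linarith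
      show "inf_z_admissible Z Tm j (\<lambda>z::complex. cscale z (B f))"
      unfolding inf_z_admissible_def
    proof (rule exI[of _ "max M 0 * (norm f + 1)"], intro allI impI)
      fix t and u :: "real \<Rightarrow> complex" assume t: "0 < t" and zu: "zmem Z {0..t} u"
      have zm: "zmem Z {0..t} (\<lambda>s. cscale (u s) f) \<and>
          znorm Z {0..t} (\<lambda>s. cscale (u s) f) \<le> (norm f + 1) * znorm Z {0..t} u"
        using zmem_map[OF Z t cscale_bl[of f] Kf cscale_bound zu] by simp
      have nn: "0 \<le> znorm Z {0..t} (\<lambda>s. cscale (u s) f)" using znorm_nonneg[OF Z t] zm by blast
      obtain x where x: "((\<lambda>s. Tm s (B (cscale (u s) f))) has_integral j x) {0..t}"
        "norm x \<le> M * znorm Z {0..t} (\<lambda>s. cscale (u s) f)"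
        using adm[OF t] zm by blast
      have "norm x \<le> max M 0 * znorm Z {0..t} (\<lambda>s. cscale (u s) f)"
        using x(2) nn by (meson max.cobounded1 mult_right_mono order_trans)
      also have "\<dots> \<le> max M 0 * ((norm f + 1) * znorm Z {0..t} u)"
        using zm by (simp add: mult_left_mono)
      finally have "norm x \<le> (max M 0 * (norm f + 1)) * znorm Z {0..t} u" by (simp add: mult.assoc)
      moreover have "((\<lambda>s. Tm s (cscale (u s) (B f))) has_integral j x) {0..t}"
        using x(1) by (auto simp: Bc)
      ultimately show "\<exists>x. ((\<lambda>s. Tm s (cscale (u s) (B f))) has_integral j x) {0..t} \<and>
          norm x \<le> (max M 0 * (norm f + 1)) * znorm Z {0..t} u" by blast
    qed
    qed
  next
    assume "\<forall>f. inf_z_admissible Z Tm j (\<lambda>z::complex. cscale z (B f))"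
    then have "\<forall>b\<in>Bs. \<exists>M. \<forall>t>0. \<forall>w::real \<Rightarrow> complex. zmem Z {0..t} w \<longrightarrow>
        (\<exists>x. ((\<lambda>s. Tm s (cscale (w s) (B b))) has_integral j x) {0..t} \<and> norm x \<le> M * znorm Z {0..t} w)"
      unfolding inf_z_admissible_def by blast
    from bchoice[OF this] obtain Mb where Mb: "\<And>b t w. b \<in> Bs \<Longrightarrow> 0 < t \<Longrightarrow> zmem Z {0..t} (w :: real \<Rightarrow> complex) \<Longrightarrow>
        (\<exists>x. ((\<lambda>s. Tm s (cscale (w s) (B b))) has_integral j x) {0..t} \<and> norm x \<le> Mb b * znorm Z {0..t} w)"
      by blast
    show "inf_z_admissible Z Tm j B"
      unfolding inf_z_admissible_def
    proof (rule exI[of _ "\<Sum>b\<in>Bs. max (Mb b) 0 * Kb b"], intro allI impI)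
      fix t and u :: "real \<Rightarrow> 'u" assume t: "0 < t" and zu: "zmem Z {0..t} u"
      have "\<forall>b\<in>Bs. \<exists>x. ((\<lambda>s. Tm s (cscale (Lb b (u s)) (B b))) has_integral j x) {0..t}
          \<and> norm x \<le> (max (Mb b) 0 * Kb b) * znorm Z {0..t} u"
      proof
        fix b assume b: "b \<in> Bs"
        have zm: "zmem Z {0..t} (\<lambda>s. Lb b (u s)) \<and> znorm Z {0..t} (\<lambda>s. Lb b (u s)) \<le> Kb b * znorm Z {0..t} u"
          using zmem_map[OF Z t Lbl[OF b] Kb(1)[OF b] Kb(2)[OF b] zu] by simp
        have nn: "0 \<le> znorm Z {0..t} (\<lambda>s. Lb b (u s))" using znorm_nonneg[OF Z t] zm by blast
        obtain x where x: "((\<lambda>s. Tm s (cscale (Lb b (u s)) (B b))) has_integral j x) {0..t}"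
          "norm x \<le> Mb b * znorm Z {0..t} (\<lambda>s. Lb b (u s))"
          using Mb[OF b t] zm by blast
        have "norm x \<le> max (Mb b) 0 * znorm Z {0..t} (\<lambda>s. Lb b (u s))"
          using x(2) nn by (meson max.cobounded1 mult_right_mono order_trans)
        also have "\<dots> \<le> max (Mb b) 0 * (Kb b * znorm Z {0..t} u)"
          using zm by (simp add: mult_left_mono)
        finally show "\<exists>x. ((\<lambda>s. Tm s (cscale (Lb b (u s)) (B b))) has_integral j x) {0..t}
          \<and> norm x \<le> (max (Mb b) 0 * Kb b) * znorm Z {0..t} u"
          using x(1) by (auto simp: mult.assoc)
      qed
      from bchoice[OF this] obtain xf where xf: "\<And>b. b \<in> Bs \<Longrightarrow> ((\<lambda>s. Tm s (cscale (Lb b (u s)) (B b))) has_integral j (xf b)) {0..t}"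
        and xb: "\<And>b. b \<in> Bs \<Longrightarrow> norm (xf b) \<le> (max (Mb b) 0 * Kb b) * znorm Z {0..t} u"
        by blast
      have "((\<lambda>s. \<Sum>b\<in>Bs. Tm s (cscale (Lb b (u s)) (B b))) has_integral (\<Sum>b\<in>Bs. j (xf b))) {0..t}"
        by (rule has_integral_sum[OF fin xf])
      then have hi: "((\<lambda>s. Tm s (B (u s))) has_integral j (\<Sum>b\<in>Bs. xf b)) {0..t}"
        using has_integral_cong[of "{0..t}" "\<lambda>s. Tm s (B (u s))" "\<lambda>s. \<Sum>b\<in>Bs. Tm s (cscale (Lb b (u s)) (B b))", OF integrand[of _ t u]]
        by (simp add: linear_sum[OF jlin])
      have "norm (\<Sum>b\<in>Bs. xf b) \<le> (\<Sum>b\<in>Bs. norm (xf b))" by (rule norm_sum)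
      also have "\<dots> \<le> (\<Sum>b\<in>Bs. (max (Mb b) 0 * Kb b) * znorm Z {0..t} u)"
        by (rule sum_mono) (rule xb)
      also have "\<dots> = (\<Sum>b\<in>Bs. max (Mb b) 0 * Kb b) * znorm Z {0..t} u"
        by (simp add: sum_distrib_right)
      finally show "\<exists>x. ((\<lambda>s. Tm s (B (u s))) has_integral j x) {0..t} \<and>
          norm x \<le> (\<Sum>b\<in>Bs. max (Mb b) 0 * Kb b) * znorm Z {0..t} u"
        using hi by blast
    qed
  qed
  show ?thesis using part1 part2 by blast
qed

end
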